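(* There is an absolute constant $C$ such that for the Adaptive-Threshold Dealer with any $n$ and $d$, and every stage $\tau\ge 0$ of the Adaptive phase, $\mathbb E[\Phi(\mathbf X^\tau)]\le C\cdot d$.
   Context: Adaptive-Threshold Dealer with $d$ mini-decks on $n$ cards ($d\mid n$): the deck is split into $d$ mini-decks, each a fixed ordered stack of $n/d$ cards. Let $L_{i,t}$ be the number of cards drawn from mini-deck $i$ before turn $t$. Adaptive phase (turns $t=1,\dots,n-2d$): repeatedly sample $i\in[d]$ uniformly until $L_{i,t}<\lceil t/d\rceil+1$, then draw the top card of mini-deck $i$. Stage $\tau\ge1$ consists of the turns $t$ with $\lceil t/d\rceil=\tau$ (turns $(\tau-1)d+1,\dots,\tau d$). Let $\mathbf L_i^\tau$ be the number of cards drawn from mini-deck $i$ by the end of stage $\tau$ (i.e. in turns $1,\dots,\tau d$), and $\mathbf X_i^\tau=\tau+2-\mathbf L_i^\tau$ the number of holes at the end of stage $\tau$; $\mathbf X^0=(2,\dots,2)$. With $\epsilon=1/200$, the potential of a vector $x\in\mathbb Z^d$ is $\Phi(x)=\sum_{i=1}^d(1+\epsilon)^{x_i}$. *)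

theory Defs
  imports "HOL-Probability.Probability"
begin

text \<open>Mini-decks are indexed by 0..d-1. A state L maps mini-deck i to the number
of cards drawn from it so far. Turns are numbered t = 1, 2, ....\<close>

definition threshold :: "nat \<Rightarrow> nat \<Rightarrow> nat" where
  "threshold d t = nat \<lceil>real t / real d\<rceil> + 1"

partial_function (spmf) sample_deck :: "nat \<Rightarrow> (nat \<Rightarrow> nat) \<Rightarrow> nat \<Rightarrow> nat spmf" where
  "sample_deck d L bound =
     bind_spmf (spmf_of_set {..<d})
       (\<lambda>i. if L i < bound then return_spmf i else sample_deck d L bound)"

fun adaptive_run :: "nat \<Rightarrow> nat \<Rightarrow> (nat \<Rightarrow> nat) spmf" where
  "adaptive_run d 0 = return_spmf (\<lambda>_. 0)"
| "adaptive_run d (Suc m) =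
     bind_spmf (adaptive_run d m)
       (\<lambda>L. bind_spmf (sample_deck d L (threshold d (Suc m)))
              (\<lambda>i. return_spmf (L(i := Suc (L i)))))"

definition holes :: "nat \<Rightarrow> (nat \<Rightarrow> nat) \<Rightarrow> nat \<Rightarrow> int" where
  "holes tau L i = int tau + 2 - int (L i)"

definition eps :: real where "eps = 1 / 200"

definition Phi :: "nat \<Rightarrow> (nat \<Rightarrow> int) \<Rightarrow> real" where
  "Phi d x = (\<Sum>i<d. (1 + eps) powi (x i))"

end

theory Submission
  imports Defs
begin


definition Sset :: "nat \<Rightarrow> (nat\<Rightarrow>nat) \<Rightarrow> nat \<Rightarrow> nat set" where
  "Sset d L b = {i. i<d \<and> L i < b}"

definition step :: "nat \<Rightarrow> nat \<Rightarrow> (nat\<Rightarrow>nat) \<Rightarrow> (nat\<Rightarrow>nat) pmf" where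
  "step d b L = (if Sset d L b = {} then return_pmf L
      else map_pmf (\<lambda>i. L(i := Suc (L i))) (pmf_of_set (Sset d L b)))"

fun run :: "nat \<Rightarrow> nat \<Rightarrow> (nat\<Rightarrow>nat) pmf" where
  "run d 0 = return_pmf (\<lambda>_. 0)"
| "run d (Suc m) = bind_pmf (run d m) (step d (threshold d (Suc m)))"

lemma finite_Sset[simp]: "finite (Sset d L b)"
  unfolding Sset_def by auto

lemma sample_deck_eq:
  assumes ne: "Sset d L b \<noteq> {}"
  shows "sample_deck d L b = spmf_of_set (Sset d L b)"
proof (rule spmf_eqI)
  fix x
  let ?S = "Sset d L b"
  let ?p = "sample_deck d L b"
  have dpos: "0 < d" using ne unfolding Sset_def by auto
  have sub: "?S \<subseteq> {..<d}" unfolding Sset_def by auto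
  have "spmf ?p x = spmf (bind_spmf (spmf_of_set {..<d})
       (\<lambda>i. if L i < b then return_spmf i else ?p)) x"
    by (subst sample_deck.simps) simp
  also have "\<dots> = (\<Sum>i<d. spmf (if L i < b then return_spmf i else ?p) x) / real d"
    using dpos by (simp add: spmf_bind measure_spmf_spmf_of_set integral_pmf_of_set)
  also have "(\<Sum>i<d. spmf (if L i < b then return_spmf i else ?p) x)
      = (\<Sum>i\<in>?S. spmf (return_spmf i) x) + (\<Sum>i\<in>{..<d}-?S. spmf ?p x)"
  proof -
    have "(\<Sum>i<d. spmf (if L i < b then return_spmf i else ?p) x)
      = (\<Sum>i\<in>?S. spmf (if L i < b then return_spmf i else ?p) x) + (\<Sum>i\<in>{..<d}-?S. spmf (if L i < b then return_spmf i else ?p) x)"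
      using sub by (metis (no_types, lifting) finite_lessThan sum.subset_diff add.commute)
    also have "\<dots> = (\<Sum>i\<in>?S. spmf (return_spmf i) x) + (\<Sum>i\<in>{..<d}-?S. spmf ?p x)"
      by (intro arg_cong2[where f="(+)"] sum.cong) (auto simp: Sset_def)
    finally show ?thesis .
  qed
  also have "(\<Sum>i\<in>?S. spmf (return_spmf i) x) = indicator ?S x"
    by (auto simp: indicator_def sum.delta' split: split_indicator)
  also have "(\<Sum>i\<in>{..<d}-?S. spmf ?p x) = real (d - card ?S) * spmf ?p x"
    using sub by (simp add: card_Diff_subset)
  finally have eq: "spmf ?p x = (indicator ?S x + real (d - card ?S) * spmf ?p x) / real d" .
  have kpos: "card ?S > 0" using ne by (simp add: card_gt_0_iff)
  have kle: "card ?S \<le> d" using card_mono[OF _ sub] by simp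
  from eq dpos have "real d * spmf ?p x = indicator ?S x + real (d - card ?S) * spmf ?p x"
    by (simp add: field_simps)
  with kle have "real (card ?S) * spmf ?p x = indicator ?S x"
    by (simp add: of_nat_diff algebra_simps)
  with kpos show "spmf ?p x = spmf (spmf_of_set ?S) x"
    using ne by (simp add: spmf_of_set eq_divide_eq mult.commute)
qed

lemma sum_upd: "finite A \<Longrightarrow> i \<in> A \<Longrightarrow> sum (f(i:=v)) A = v + sum f (A - {i})"
  by (simp add: sum.remove)

lemma sum_upd_Suc: fixes L :: "nat \<Rightarrow> nat" shows "(i::nat) < d \<Longrightarrow> (\<Sum>j<d. (L(i := Suc (L i))) j) = Suc (\<Sum>j<d. L j)"
proof -
  assume i: "i < d"
  have "(\<Sum>j<d. (L(i := Suc (L i))) j) = Suc (L i) + sum L ({..<d} - {i})"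
    using sum_upd[OF finite_lessThan, where i=i and f=L and v="Suc (L i)"] i by simp
  also have "sum L {..<d} = L i + sum L ({..<d} - {i})" using sum.remove[of "{..<d}" i L] i by simp
  ultimately show ?thesis by simp
qed

lemma thr_mono: "threshold d m \<le> threshold d (Suc m)"
  unfolding threshold_def
  by (intro add_right_mono nat_mono ceiling_mono divide_right_mono) auto

lemma thr_big: assumes "0 < d" shows "Suc m + d \<le> d * threshold d (Suc m)"
proof -
  have c: "real (Suc m) / real d \<le> of_int \<lceil>real (Suc m) / real d\<rceil>" by (rule le_of_int_ceiling)
  have nn: "0 \<le> \<lceil>real (Suc m) / real d\<rceil>"
    by (metis ceiling_mono ceiling_zero divide_nonneg_nonneg of_nat_0_le_iff)
  have "real (Suc m) \<le> of_int \<lceil>real (Suc m) / real d\<rceil> * real d"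
    using c assms by (subst (asm) pos_divide_le_eq) auto
  then have "real (Suc m) \<le> real d * of_int \<lceil>real (Suc m) / real d\<rceil>"
    by (simp add: mult.commute)
  also have "of_int \<lceil>real (Suc m) / real d\<rceil> = real (nat \<lceil>real (Suc m) / real d\<rceil>)"
    using nn by simp
  finally have "Suc m \<le> d * nat \<lceil>real (Suc m) / real d\<rceil>"
    by (metis of_nat_le_iff of_nat_mult)
  then show ?thesis unfolding threshold_def by (simp add: algebra_simps)
qed

lemma Sset_ne: assumes "0 < d" "(\<Sum>i<d. L i) = m" shows "Sset d L (threshold d (Suc m)) \<noteq> {}"
proof
  assume e: "Sset d L (threshold d (Suc m)) = {}"
  then have "\<forall>i<d. threshold d (Suc m) \<le> L i" unfolding Sset_def by auto
  then have "(\<Sum>i<d. threshold d (Suc m)) \<le> (\<Sum>i<d. L i)" by (intro sum_mono) auto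
  then have "d * threshold d (Suc m) \<le> m" using assms by simp
  with thr_big[OF assms(1), of m] show False by simp
qed

lemma thr_stage: assumes "0 < d" "s < d" shows "threshold d (Suc (tau*d + s)) = tau + 2"
proof -
  have "\<lceil>real (Suc (tau*d + s)) / real d\<rceil> = int tau + 1"
  proof (rule ceiling_unique)
    have "real tau * real d < real (Suc (tau*d+s))" by simp
    then show "of_int (int tau + 1) - 1 < real (Suc (tau * d + s)) / real d"
      using assms by (simp add: pos_less_divide_eq)
    have "real (Suc (tau*d+s)) \<le> (real tau + 1) * real d" using assms
      by (simp add: algebra_simps)
    then show "real (Suc (tau * d + s)) / real d \<le> of_int (int tau + 1)"
      using assms by (simp add: field_simps)
  qed
  then show ?thesis unfolding threshold_def by simp
qed

lemma thr_at: assumes "0 < d" shows "threshold d (tau*d) = tau + 1"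
  using assms unfolding threshold_def by simp

lemma set_step: "L' \<in> set_pmf (step d b L) \<Longrightarrow> Sset d L b \<noteq> {} \<Longrightarrow>
   \<exists>i\<in>Sset d L b. L' = L(i := Suc (L i))"
  unfolding step_def by auto

lemma finite_step[simp]: "finite (set_pmf (step d b L))"
  unfolding step_def by auto

lemma finite_run: "finite (set_pmf (run d m))"
  by (induction m) auto

lemma run_inv: assumes "0 < d" "L \<in> set_pmf (run d m)"
  shows "(\<Sum>i<d. L i) = m \<and> (\<forall>i<d. L i \<le> threshold d m)"
  using assms(2)
proof (induction m arbitrary: L)
  case 0 then show ?case by simp
next
  case (Suc m)
  then obtain L0 where L0: "L0 \<in> set_pmf (run d m)" "L \<in> set_pmf (step d (threshold d (Suc m)) L0)"
    by auto
  from Suc.IH[OF L0(1)] have s: "(\<Sum>i<d. L0 i) = m" and le: "\<forall>i<d. L0 i \<le> threshold d m" by auto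
  from set_step[OF L0(2) Sset_ne[OF assms(1) s]] obtain i where
    i: "i \<in> Sset d L0 (threshold d (Suc m))" and L: "L = L0(i := Suc (L0 i))" by auto
  have "i < d" using i unfolding Sset_def by auto
  have "(\<Sum>i<d. L i) = Suc m" using L sum_upd_Suc[OF \<open>i<d\<close>] s by simp
  moreover have "\<forall>j<d. L j \<le> threshold d (Suc m)"
    using le i thr_mono[of d m] unfolding L Sset_def by auto
  ultimately show ?case by simp
qed

lemma adaptive_run_eq: assumes "0 < d" shows "adaptive_run d m = spmf_of_pmf (run d m)"
proof (induction m)
  case 0 then show ?case by simp
next
  case (Suc m)
  have "adaptive_run d (Suc m) = bind_pmf (run d m) (\<lambda>L. bind_spmf (sample_deck d L (threshold d (Suc m)))
              (\<lambda>i. return_spmf (L(i := Suc (L i)))))"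
    by (simp add: Suc)
  also have "\<dots> = bind_pmf (run d m) (\<lambda>L. spmf_of_pmf (step d (threshold d (Suc m)) L))"
  proof (rule bind_pmf_cong[OF refl])
    fix L assume "L \<in> set_pmf (run d m)"
    from run_inv[OF assms this] have s: "(\<Sum>i<d. L i) = m" by simp
    note ne = Sset_ne[OF assms s]
    show "bind_spmf (sample_deck d L (threshold d (Suc m))) (\<lambda>i. return_spmf (L(i := Suc (L i))))
      = spmf_of_pmf (step d (threshold d (Suc m)) L)"
      unfolding sample_deck_eq[OF ne] step_def using ne
      by (simp add: map_spmf_conv_bind_spmf[symmetric] spmf_of_pmf_pmf_of_set[symmetric] del: spmf_of_pmf_pmf_of_set)
  qed
  also have "\<dots> = spmf_of_pmf (run d (Suc m))" by (simp add: spmf_of_pmf_bind)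
  finally show ?case .
qed



definition aa :: real where "aa = eps / (1 + eps)"

lemma eps_val: "eps = 1/200" by (simp add: eps_def)
lemma aa_val: "aa = 1/201" by (simp add: aa_def eps_def)

definition w :: "nat \<Rightarrow> nat \<Rightarrow> real" where
  "w tau l = (1 + eps) powi (int tau + 2 - int l)"

definition Psi :: "nat \<Rightarrow> nat \<Rightarrow> (nat \<Rightarrow> nat) \<Rightarrow> real" where
  "Psi d tau L = (\<Sum>i<d. w tau (L i))"

lemma Phi_holes: "Phi d (holes tau L) = Psi d tau L"
  by (simp add: Phi_def holes_def Psi_def w_def)

lemma Phi_holes_Suc: "Phi d (holes (Suc tau) L) = (1 + eps) * Psi d tau L"
proof -
  have "\<And>i. (1 + eps) powi (int (Suc tau) + 2 - int (L i)) = (1 + eps) * w tau (L i)"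
  proof -
    fix i
    have "int (Suc tau) + 2 - int (L i) = (int tau + 2 - int (L i)) + 1" by simp
    then have "(1 + eps) powi (int (Suc tau) + 2 - int (L i)) = (1 + eps) powi ((int tau + 2 - int (L i)) + 1)"
      by (rule arg_cong)
    also have "\<dots> = (1 + eps) * w tau (L i)"
      unfolding w_def by (rule power_int_add_1') (simp add: eps_def)
    finally show "(1 + eps) powi (int (Suc tau) + 2 - int (L i)) = (1 + eps) * w tau (L i)" .
  qed
  then show ?thesis by (simp add: Phi_def holes_def Psi_def sum_distrib_left)
qed

lemma w_Suc: "w tau (Suc l) = w tau l - aa * w tau l"
proof -
  have e: "int tau + 2 - int (Suc l) = (int tau + 2 - int l) - 1" by simp
  have "w tau (Suc l) = w tau l / (1 + eps)"
    unfolding w_def e by (subst power_int_diff) (auto simp: eps_def)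
  also have "\<dots> = w tau l - aa * w tau l" by (simp add: aa_def eps_def field_simps)
  finally show ?thesis .
qed

lemma w_top: "w tau (tau + 2) = 1" "w tau (Suc (Suc tau)) = 1" by (simp_all add: w_def)

lemma w_ge1: "l \<le> tau + 2 \<Longrightarrow> 1 \<le> w tau l"
proof -
  assume "l \<le> tau + 2"
  then have "int tau + 2 - int l = int (tau + 2 - l)" by simp
  then show ?thesis unfolding w_def by (simp add: eps_def)
qed

lemma w_pos: "0 < w tau l" by (simp add: w_def eps_def)

definition Tset :: "nat \<Rightarrow> (nat\<Rightarrow>nat) \<Rightarrow> nat \<Rightarrow> nat set" where
  "Tset d L b = {i. i<d \<and> L i = b}"
definition Oset :: "nat \<Rightarrow> (nat\<Rightarrow>nat) \<Rightarrow> nat \<Rightarrow> nat set" where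
  "Oset d L b = {i. i<d \<and> Suc (L i) = b}"

definition Zf :: "nat \<Rightarrow> nat \<Rightarrow> (nat\<Rightarrow>nat) \<Rightarrow> real" where
  "Zf d b L = real (card (Tset d L b))"

lemma finite_Tset[simp]: "finite (Tset d L b)" unfolding Tset_def by auto
lemma finite_Oset[simp]: "finite (Oset d L b)" unfolding Oset_def by auto

lemma E_bind:
  fixes h :: "'b \<Rightarrow> real"
  assumes "finite (set_pmf p)" "\<And>x. finite (set_pmf (f x))"
  shows "measure_pmf.expectation (p \<bind> f) h = measure_pmf.expectation p (\<lambda>x. measure_pmf.expectation (f x) h)"
proof -
  have "measure_pmf.expectation (p \<bind> f) h = (\<Sum>a\<in>set_pmf p. pmf p a *\<^sub>R measure_pmf.expectation (f a) h)"
    by (rule pmf_expectation_bind[of "set_pmf p"]) (use assms in auto)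
  also have "\<dots> = measure_pmf.expectation p (\<lambda>x. measure_pmf.expectation (f x) h)"
    using assms by (subst integral_measure_pmf[of "set_pmf p"]) auto
  finally show ?thesis .
qed

lemma stepE:
  assumes "Sset d L b \<noteq> {}"
  shows "measure_pmf.expectation (step d b L) h
     = (\<Sum>i\<in>Sset d L b. h (L(i := Suc (L i)))) / real (card (Sset d L b))"
  using assms unfolding step_def by (simp add: integral_pmf_of_set)

lemma split_ST:
  assumes "\<forall>i<d. L i \<le> b"
  shows "{..<d} = Sset d L b \<union> Tset d L b" "Sset d L b \<inter> Tset d L b = {}"
  using assms unfolding Sset_def Tset_def by (auto simp: le_less)

lemma card_ST:
  assumes "\<forall>i<d. L i \<le> b"
  shows "real (card (Sset d L b)) + Zf d b L = real d"
proof -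
  have "card {..<d} = card (Sset d L b) + card (Tset d L b)"
    using split_ST[OF assms] by (simp add: card_Un_disjoint)
  then show ?thesis unfolding Zf_def by simp
qed

lemma Psi_upd: assumes "i < d"
  shows "Psi d tau (L(i := v)) = Psi d tau L - w tau (L i) + w tau v"
proof -
  have "Psi d tau (L(i := v)) = (\<Sum>j<d. ((\<lambda>j. w tau (L j))(i := w tau v)) j)"
    unfolding Psi_def by (intro sum.cong) auto
  also have "\<dots> = w tau v + (\<Sum>j\<in>{..<d}-{i}. w tau (L j))"
    using assms by (subst sum_upd) auto
  also have "Psi d tau L = w tau (L i) + (\<Sum>j\<in>{..<d}-{i}. w tau (L j))"
    unfolding Psi_def using assms by (subst sum.remove[of _ i]) auto
  ultimately show ?thesis by simp
qed

lemma sum_w_S: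
  assumes "\<forall>i<d. L i \<le> tau + 2"
  shows "(\<Sum>i\<in>Sset d L (tau+2). w tau (L i)) = Psi d tau L - Zf d (tau+2) L"
proof -
  have "Psi d tau L = (\<Sum>i\<in>Sset d L (tau+2). w tau (L i)) + (\<Sum>i\<in>Tset d L (tau+2). w tau (L i))"
    unfolding Psi_def using split_ST[OF assms] by (simp add: sum.union_disjoint)
  also have "(\<Sum>i\<in>Tset d L (tau+2). w tau (L i)) = (\<Sum>i\<in>Tset d L (tau+2). 1)"
    by (intro sum.cong) (auto simp: Tset_def w_top)
  finally show ?thesis by (simp add: Zf_def)
qed

lemma Psi_ge: assumes "\<forall>i<d. L i \<le> tau + 2" shows "real d \<le> Psi d tau L"
proof -
  have "(\<Sum>i<d. (1::real)) \<le> Psi d tau L" unfolding Psi_def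
    using assms by (intro sum_mono w_ge1) auto
  then show ?thesis by simp
qed

lemma EPsi_step:
  assumes le: "\<forall>i<d. L i \<le> tau + 2" and ne: "Sset d L (tau+2) \<noteq> {}"
  shows "measure_pmf.expectation (step d (tau+2) L) (Psi d tau)
     = Psi d tau L - aa * (Psi d tau L - Zf d (tau+2) L) / real (card (Sset d L (tau+2)))"
proof -
  let ?S = "Sset d L (tau+2)"
  have "(\<Sum>i\<in>?S. Psi d tau (L(i := Suc (L i)))) = (\<Sum>i\<in>?S. Psi d tau L - aa * w tau (L i))"
    by (intro sum.cong) (auto simp: Psi_upd Sset_def w_Suc)
  also have "\<dots> = real (card ?S) * Psi d tau L - aa * (\<Sum>i\<in>?S. w tau (L i))"
    by (simp add: sum_subtractf sum_distrib_left[symmetric])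
  also have "\<dots> = real (card ?S) * Psi d tau L - aa * (Psi d tau L - Zf d (tau+2) L)"
    using sum_w_S[OF le] by simp
  finally have e: "(\<Sum>i\<in>?S. Psi d tau (L(i := Suc (L i)))) = real (card ?S) * Psi d tau L - aa * (Psi d tau L - Zf d (tau+2) L)" .
  have "card ?S > 0" using ne by (simp add: card_gt_0_iff)
  then show ?thesis using ne e by (simp add: stepE field_simps)
qed

lemma Tset_upd:
  assumes "i \<in> Sset d L b"
  shows "Tset d (L(i := Suc (L i))) b = (if Suc (L i) = b then insert i (Tset d L b) else Tset d L b)"
  using assms unfolding Tset_def Sset_def by auto

lemma Oset_sub: "Oset d L b \<subseteq> Sset d L b" unfolding Oset_def Sset_def by auto

lemma EZ_step:
  assumes le: "\<forall>i<d. L i \<le> b" and ne: "Sset d L b \<noteq> {}"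
  shows "measure_pmf.expectation (step d b L) (Zf d b)
     = Zf d b L + real (card (Oset d L b)) / real (card (Sset d L b))"
proof -
  let ?S = "Sset d L b"
  have "(\<Sum>i\<in>?S. Zf d b (L(i := Suc (L i)))) = (\<Sum>i\<in>?S. Zf d b L + (if Suc (L i) = b then 1 else 0))"
  proof (intro sum.cong refl)
    fix i assume i: "i \<in> ?S"
    have "i \<notin> Tset d L b" using i unfolding Sset_def Tset_def by auto
    then show "Zf d b (L(i := Suc (L i))) = Zf d b L + (if Suc (L i) = b then 1 else 0)"
      unfolding Zf_def Tset_upd[OF i] by simp
  qed
  also have "\<dots> = real (card ?S) * Zf d b L + real (card (Oset d L b))"
  proof -
    have "(\<Sum>i\<in>?S. (if Suc (L i) = b then 1 else 0::real)) = (\<Sum>i\<in>{i\<in>?S. Suc (L i) = b}. 1)"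
      by (rule sum.inter_filter[symmetric]) simp
    also have "{i\<in>?S. Suc (L i) = b} = Oset d L b" unfolding Sset_def Oset_def by auto
    finally show ?thesis by (simp add: sum.distrib)
  qed
  finally have e: "(\<Sum>i\<in>?S. Zf d b (L(i := Suc (L i)))) = real (card ?S) * Zf d b L + real (card (Oset d L b))" .
  have "card ?S > 0" using ne by (simp add: card_gt_0_iff)
  then show ?thesis using ne by (simp add: stepE e field_simps)
qed

lemma OZ_bound:
  assumes le: "\<forall>i<d. L i \<le> b" and sm: "(\<Sum>i<d. L i) = m"
  shows "real (card (Oset d L b)) + 2 * Zf d b L \<ge> 2 * real d + real m - real d * real b"
proof -
  have pt: "\<And>i. i < d \<Longrightarrow> 2 - 2 * (if L i = b then 1 else 0) - (if Suc (L i) = b then 1 else 0)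
          \<le> real b - real (L i)"
    using le by (auto simp: le_Suc_eq)
  have "(\<Sum>i<d. 2 - 2 * (if L i = b then 1 else 0) - (if Suc (L i) = b then 1 else (0::real)))
        \<le> (\<Sum>i<d. real b - real (L i))"
    by (intro sum_mono pt) auto
  moreover have "(\<Sum>i<d. real b - real (L i)) = real d * real b - real m"
    using sm by (simp add: sum_subtractf flip: of_nat_sum)
  moreover have "(\<Sum>i<d. (if L i = b then 1 else (0::real))) = Zf d b L"
  proof -
    have "(\<Sum>i<d. (if L i = b then 1 else (0::real))) = (\<Sum>i\<in>{i\<in>{..<d}. L i = b}. 1)"
      by (rule sum.inter_filter[symmetric]) simp
    also have "{i\<in>{..<d}. L i = b} = Tset d L b" unfolding Tset_def by auto
    finally show ?thesis by (simp add: Zf_def)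
  qed
  moreover have "(\<Sum>i<d. (if Suc (L i) = b then 1 else (0::real))) = real (card (Oset d L b))"
  proof -
    have "(\<Sum>i<d. (if Suc (L i) = b then 1 else (0::real))) = (\<Sum>i\<in>{i\<in>{..<d}. Suc (L i) = b}. 1)"
      by (rule sum.inter_filter[symmetric]) simp
    also have "{i\<in>{..<d}. Suc (L i) = b} = Oset d L b" unfolding Oset_def by auto
    finally show ?thesis by simp
  qed
  ultimately show ?thesis
    by (simp add: sum_subtractf sum.distrib sum_distrib_left[symmetric])
qed



fun stage :: "nat \<Rightarrow> nat \<Rightarrow> (nat\<Rightarrow>nat) \<Rightarrow> nat \<Rightarrow> (nat\<Rightarrow>nat) pmf" where
  "stage d b L0 0 = return_pmf L0"
| "stage d b L0 (Suc s) = stage d b L0 s \<bind> step d b"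

lemma finite_stage[simp]: "finite (set_pmf (stage d b L0 s))"
  by (induction s) auto

lemma run_split: assumes "0 < d" "s \<le> d"
  shows "run d (tau*d + s) = run d (tau*d) \<bind> (\<lambda>L0. stage d (tau+2) L0 s)"
  using assms(2)
proof (induction s)
  case 0 then show ?case by (simp add: bind_return_pmf')
next
  case (Suc s)
  then have sd: "s < d" by simp
  have "run d (tau*d + Suc s) = run d (tau*d + s) \<bind> step d (tau+2)"
    using thr_stage[OF assms(1) sd, of tau] by simp
  also have "\<dots> = run d (tau*d) \<bind> (\<lambda>L0. stage d (tau+2) L0 (Suc s))"
    using Suc by (simp add: bind_assoc_pmf)
  finally show ?case .
qed

lemma Sset_ne_stage:
  assumes "s < d" "(\<Sum>i<d. L i) = tau*d + s"
  shows "Sset d L (tau+2) \<noteq> {}"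
proof
  assume "Sset d L (tau+2) = {}"
  then have "\<forall>i<d. tau + 2 \<le> L i" unfolding Sset_def by auto
  then have "(\<Sum>i<d. tau + 2) \<le> (\<Sum>i<d. L i)" by (intro sum_mono) auto
  then have "d * (tau + 2) \<le> tau*d + s" using assms by simp
  with assms(1) show False by (simp add: algebra_simps)
qed

lemma stage_inv:
  assumes "(\<Sum>i<d. L0 i) = tau*d" "\<forall>i<d. L0 i \<le> tau + 2"
    "L \<in> set_pmf (stage d (tau+2) L0 s)" "s \<le> d"
  shows "(\<Sum>i<d. L i) = tau*d + s \<and> (\<forall>i<d. L i \<le> tau + 2) \<and> Psi d tau L \<le> Psi d tau L0"
  using assms(3,4)
proof (induction s arbitrary: L)
  case 0 then show ?case using assms by simp
next
  case (Suc s)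
  then obtain L' where L': "L' \<in> set_pmf (stage d (tau+2) L0 s)" "L \<in> set_pmf (step d (tau+2) L')"
    by auto
  from Suc.IH[OF L'(1)] Suc.prems have IH: "(\<Sum>i<d. L' i) = tau*d + s" "\<forall>i<d. L' i \<le> tau + 2"
     "Psi d tau L' \<le> Psi d tau L0" by auto
  have sd: "s < d" using Suc.prems by simp
  from set_step[OF L'(2) Sset_ne_stage[OF sd IH(1)]] obtain i where
    i: "i \<in> Sset d L' (tau+2)" and L: "L = L'(i := Suc (L' i))" by auto
  have id: "i < d" using i unfolding Sset_def by auto
  have "(\<Sum>i<d. L i) = tau*d + Suc s" using L sum_upd_Suc[OF id] IH(1) by simp
  moreover have "\<forall>j<d. L j \<le> tau + 2" using IH(2) i unfolding L Sset_def by auto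
  moreover have "Psi d tau L \<le> Psi d tau L'"
    unfolding L Psi_upd[OF id] w_Suc using w_pos[of tau "L' i"] by (simp add: aa_def eps_def)
  ultimately show ?case using IH(3) by simp
qed

lemma arithA:
  fixes a D P Z Psi Psi0 :: real
  assumes a: "0 \<le> a" and D: "0 < D" and P: "0 < P" and PZ: "P + Z = D" and Z: "0 \<le> Z"
    and Psi: "D \<le> Psi" "Psi \<le> Psi0"
  shows "Psi - a * (Psi - Z) / P \<le> (1 - 2*a/D) * Psi + (a/D) * Psi0 - (a*Psi0/D^2) * Z + 2*a"
proof -
  have PZ': "P = D - Z" using PZ by simp
  have ZD: "Z \<le> D" using PZ P by simp
  have h1: "(Psi - Z) * (D + Z) / D^2 \<le> (Psi - Z) / P"
  proof -
    have "P * (D + Z) \<le> D^2" unfolding PZ' power2_eq_square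
      by (simp add: algebra_simps)
    then have "(D + Z) / D^2 \<le> 1 / P" using P D
      by (simp add: divide_simps mult.commute)
    then have "(Psi - Z) * ((D + Z) / D^2) \<le> (Psi - Z) * (1 / P)"
      using Psi ZD by (intro mult_left_mono) auto
    then show ?thesis by simp
  qed
  have h2: "(2*Psi - Psi0 + Psi0 * Z / D) / D - 2 \<le> (Psi - Z) * (D + Z) / D^2"
  proof -
    have eq: "(Psi - Z) * (D + Z) - (D * (2*Psi - Psi0) + Psi0 * Z - 2 * D^2)
        = (Psi0 - Psi) * (D - Z) + (D - Z) * (2*D + Z)"
      by (simp add: algebra_simps power2_eq_square)
    have "0 \<le> (Psi0 - Psi) * (D - Z) + (D - Z) * (2*D + Z)"
      using Psi ZD Z D by (intro add_nonneg_nonneg mult_nonneg_nonneg) auto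
    then have "D * (2*Psi - Psi0) + Psi0 * Z - 2 * D^2 \<le> (Psi - Z) * (D + Z)"
      using eq by linarith
    then have "(D * (2*Psi - Psi0) + Psi0 * Z - 2 * D^2) / D^2 \<le> (Psi - Z) * (D + Z) / D^2"
      using D by (intro divide_right_mono) auto
    moreover have "(D * (2*Psi - Psi0) + Psi0 * Z - 2 * D^2) / D^2 = (2*Psi - Psi0 + Psi0 * Z / D) / D - 2"
      using D by (simp add: field_simps power2_eq_square)
    ultimately show ?thesis by simp
  qed
  have "a * ((2*Psi - Psi0 + Psi0 * Z / D) / D - 2) \<le> a * ((Psi - Z) / P)"
    using h1 h2 a by (intro mult_left_mono) auto
  moreover have "a * ((2*Psi - Psi0 + Psi0 * Z / D) / D - 2)
     = Psi - ((1 - 2*a/D) * Psi + (a/D) * Psi0 - (a*Psi0/D^2) * Z + 2*a)"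
    using D by (simp add: field_simps power2_eq_square)
  ultimately show ?thesis by simp
qed

lemma arithB:
  fixes D P Z Ob s :: real
  assumes D: "0 < D" and P: "0 < P" "P \<le> D" and Ob: "0 \<le> Ob" "s \<le> Ob + 2 * Z"
  shows "(1 - 2/D) * Z + s/D \<le> Z + Ob / P"
proof -
  have "Ob / D \<le> Ob / P" using P Ob D by (intro divide_left_mono) auto
  moreover have "(s - 2*Z) / D \<le> Ob / D" using Ob D by (intro divide_right_mono) auto
  moreover have "(1 - 2/D) * Z + s/D = Z + (s - 2*Z)/D" using D by (simp add: field_simps)
  ultimately show ?thesis by simp
qed

lemma stepA:
  assumes d: "0 < d" and s: "s < d" and sm: "(\<Sum>i<d. L i) = tau*d + s" and le: "\<forall>i<d. L i \<le> tau + 2"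
    and P0: "Psi d tau L \<le> Psi0"
  shows "measure_pmf.expectation (step d (tau+2) L) (Psi d tau)
    \<le> (1 - 2*aa/d) * Psi d tau L + (aa/d) * Psi0 - (aa*Psi0/(real d)^2) * Zf d (tau+2) L + 2*aa"
proof -
  note ne = Sset_ne_stage[OF s sm]
  have P: "0 < real (card (Sset d L (tau+2)))" using ne by (simp add: card_gt_0_iff)
  show ?thesis
    unfolding EPsi_step[OF le ne]
    by (rule arithA) (use P card_ST[OF le] Psi_ge[OF le] P0 d in \<open>auto simp: aa_def eps_def Zf_def\<close>)
qed

lemma stepB:
  assumes d: "0 < d" and s: "s < d" and sm: "(\<Sum>i<d. L i) = tau*d + s" and le: "\<forall>i<d. L i \<le> tau + 2"
  shows "(1 - 2/d) * Zf d (tau+2) L + real s / d \<le> measure_pmf.expectation (step d (tau+2) L) (Zf d (tau+2))"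
proof -
  note ne = Sset_ne_stage[OF s sm]
  have P: "0 < real (card (Sset d L (tau+2)))" using ne by (simp add: card_gt_0_iff)
  have OZ: "real s \<le> real (card (Oset d L (tau+2))) + 2 * Zf d (tau+2) L"
    using OZ_bound[OF le sm] by (simp add: algebra_simps)
  show ?thesis
    unfolding EZ_step[OF le ne]
    by (rule arithB) (use P card_ST[OF le] OZ d in \<open>auto simp: Zf_def\<close>)
qed



lemma E_lin:
  fixes f :: "'a \<Rightarrow> real"
  assumes "finite (set_pmf p)"
  shows "measure_pmf.expectation p (\<lambda>x. c * f x + k) = c * measure_pmf.expectation p f + k"
proof -
  have i: "integrable (measure_pmf p) f" using assms by (rule integrable_measure_pmf_finite)
  have "measure_pmf.expectation p (\<lambda>x. c * f x + k) = measure_pmf.expectation p (\<lambda>x. c * f x) + measure_pmf.expectation p (\<lambda>x. k)"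
    using i by (intro Bochner_Integration.integral_add) auto
  then show ?thesis by simp
qed

lemma E_lin2:
  fixes f g :: "'a \<Rightarrow> real"
  assumes "finite (set_pmf p)"
  shows "measure_pmf.expectation p (\<lambda>x. c * f x + e - cc * g x + k)
     = c * measure_pmf.expectation p f + e - cc * measure_pmf.expectation p g + k"
proof -
  have i: "integrable (measure_pmf p) h" for h :: "'a \<Rightarrow> real" using assms by (rule integrable_measure_pmf_finite)
  have "measure_pmf.expectation p (\<lambda>x. c * f x + e - cc * g x + k)
     = measure_pmf.expectation p (\<lambda>x. c * f x + e - cc * g x) + measure_pmf.expectation p (\<lambda>x. k)"
    using i by (intro Bochner_Integration.integral_add) auto
  also have "measure_pmf.expectation p (\<lambda>x. c * f x + e - cc * g x)
     = measure_pmf.expectation p (\<lambda>x. c * f x + e) - measure_pmf.expectation p (\<lambda>x. cc * g x)"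
    using i by (intro Bochner_Integration.integral_diff) auto
  also have "measure_pmf.expectation p (\<lambda>x. c * f x + e)
     = measure_pmf.expectation p (\<lambda>x. c * f x) + measure_pmf.expectation p (\<lambda>x. e)"
    using i by (intro Bochner_Integration.integral_add) auto
  finally show ?thesis by simp
qed

lemma E_mono:
  fixes f g :: "'a \<Rightarrow> real"
  assumes "finite (set_pmf p)" "\<And>x. x \<in> set_pmf p \<Longrightarrow> f x \<le> g x"
  shows "measure_pmf.expectation p f \<le> measure_pmf.expectation p g"
  using assms by (intro integral_mono_AE integrable_measure_pmf_finite) (auto simp: AE_measure_pmf_iff)

lemma cube_le: "real s * (real s - 1) * (real s - 2) \<le> real s ^ 3"
proof (cases s)
  case 0 then show ?thesis by simp
next
  case (Suc m)
  have "real s ^ 3 - real s * (real s - 1) * (real s - 2) = real s * (3 * real s - 2)"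
    by (simp add: algebra_simps power3_eq_cube)
  also have "\<dots> \<ge> 0" using Suc by (intro mult_nonneg_nonneg) auto
  finally show ?thesis by simp
qed

lemma Zbound:
  assumes d: "2 \<le> d" and L0: "(\<Sum>i<d. L0 i) = tau*d" "\<forall>i<d. L0 i \<le> tau + 2" and s: "s \<le> d"
  shows "real s * (real s - 1) / (6 * real d) \<le> measure_pmf.expectation (stage d (tau+2) L0 s) (Zf d (tau+2))"
  using s
proof (induction s)
  case 0 then show ?case by (simp add: Zf_def)
next
  case (Suc s)
  have sd: "s < d" using Suc by simp
  let ?p = "stage d (tau+2) L0 s"
  have "measure_pmf.expectation (stage d (tau+2) L0 (Suc s)) (Zf d (tau+2))
      = measure_pmf.expectation ?p (\<lambda>L. measure_pmf.expectation (step d (tau+2) L) (Zf d (tau+2)))"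
    by (simp add: E_bind)
  also have "\<dots> \<ge> measure_pmf.expectation ?p (\<lambda>L. (1 - 2/d) * Zf d (tau+2) L + real s / d)"
  proof (rule E_mono)
    fix L assume "L \<in> set_pmf ?p"
    from stage_inv[OF L0 this] Suc.prems have "(\<Sum>i<d. L i) = tau*d + s" "\<forall>i<d. L i \<le> tau + 2" by auto
    then show "(1 - 2/d) * Zf d (tau+2) L + real s / d \<le> measure_pmf.expectation (step d (tau+2) L) (Zf d (tau+2))"
      using stepB[of d s L tau] sd d by simp
  qed simp
  also have "measure_pmf.expectation ?p (\<lambda>L. (1 - 2/d) * Zf d (tau+2) L + real s / d)
     = (1 - 2/d) * measure_pmf.expectation ?p (Zf d (tau+2)) + real s / d"
    by (simp add: E_lin)
  finally have ge: "(1 - 2/d) * measure_pmf.expectation ?p (Zf d (tau+2)) + real s / d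
     \<le> measure_pmf.expectation (stage d (tau+2) L0 (Suc s)) (Zf d (tau+2))" .
  have c: "0 \<le> 1 - 2 / real d" using d by (simp add: field_simps)
  have "(1 - 2/d) * (real s * (real s - 1) / (6 * real d)) \<le> (1 - 2/d) * measure_pmf.expectation ?p (Zf d (tau+2))"
    using Suc sd c by (intro mult_left_mono) auto
  moreover have "real (Suc s) * (real (Suc s) - 1) / (6 * real d) \<le> (1 - 2/d) * (real s * (real s - 1) / (6 * real d)) + real s / d"
  proof -
    have dpos: "0 < real d" using d by simp
    have "(1 - 2/d) * (real s * (real s - 1) / (6 * real d)) + real s / d - real (Suc s) * (real (Suc s) - 1) / (6 * real d)
        = real s * (2 * real d - (real s - 1)) / (3 * real d ^ 2)"
      using dpos by (simp add: field_simps power2_eq_square)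
    also have "\<dots> \<ge> 0" using sd by (intro divide_nonneg_nonneg mult_nonneg_nonneg) auto
    finally show ?thesis by simp
  qed
  ultimately show ?case using ge by linarith
qed

definition c1 :: real where "c1 = 197 / 40401"

definition Kf :: "nat \<Rightarrow> nat \<Rightarrow> real" where
  "Kf d s = 1 - c1 * real s / real d - aa * (real s * (real s - 1) * (real s - 2)) / (18 * real d ^ 3)"

lemma Kf_step:
  assumes d: "2 \<le> d" and s: "s < d"
  shows "(1 - 2*aa/d) * Kf d s + aa / d - aa * (real s * (real s - 1) / (6 * real d)) / (real d)^2 \<le> Kf d (Suc s)"
proof -
  have dpos: "0 < real d" using d by simp
  have id: "Kf d (Suc s) = Kf d s - c1 / d - aa * (real s * (real s - 1) / (6 * real d)) / (real d)^2"
    unfolding Kf_def using dpos by (simp add: field_simps power2_eq_square power3_eq_cube)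
  have g: "real s * (real s - 1) * (real s - 2) \<le> real d ^ 3"
  proof -
    have "real s ^ 3 \<le> real d ^ 3" using s by (intro power_mono) auto
    then show ?thesis using cube_le[of s] by linarith
  qed
  have g': "(real s * (real s - 1) * (real s - 2)) / (18 * real d ^ 3) \<le> 1/18"
    using g dpos by (simp add: divide_simps)
  have x: "c1 * real s / real d \<le> c1" using s dpos by (simp add: c1_def divide_simps)
  have Klow: "1 - c1 - aa/18 \<le> Kf d s"
  proof -
    have "aa * (real s * (real s - 1) * (real s - 2)) / (18 * real d ^ 3) \<le> aa * (1/18)"
      using g' by (simp add: aa_val)
    then show ?thesis unfolding Kf_def using x by (simp add: aa_val)
  qed
  have key: "aa + c1 \<le> 2 * aa * Kf d s"
  proof -
    have "aa + c1 \<le> 2 * aa * (1 - c1 - aa/18)" by (simp add: aa_val c1_def)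
    also have "\<dots> \<le> 2 * aa * Kf d s" using Klow by (simp add: aa_val)
    finally show ?thesis .
  qed
  have "(1 - 2*aa/d) * Kf d s + aa / d \<le> Kf d s - c1 / d"
  proof -
    have "(aa + c1) / d \<le> (2 * aa * Kf d s) / d" using key dpos by (intro divide_right_mono) auto
    then show ?thesis by (simp add: field_simps add_divide_distrib)
  qed
  then show ?thesis unfolding id by simp
qed

lemma Ebound:
  assumes d: "2 \<le> d" and L0: "(\<Sum>i<d. L0 i) = tau*d" "\<forall>i<d. L0 i \<le> tau + 2" and s: "s \<le> d"
  shows "measure_pmf.expectation (stage d (tau+2) L0 s) (Psi d tau) \<le> Kf d s * Psi d tau L0 + 2 * aa * s"
  using s
proof (induction s)
  case 0 then show ?case by (simp add: Kf_def)
next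
  case (Suc s)
  have sd: "s < d" using Suc by simp
  have dpos: "0 < d" using d by simp
  let ?p = "stage d (tau+2) L0 s"
  let ?P0 = "Psi d tau L0"
  have P0: "0 \<le> ?P0" using Psi_ge[OF L0(2)] by simp
  have "measure_pmf.expectation (stage d (tau+2) L0 (Suc s)) (Psi d tau)
      = measure_pmf.expectation ?p (\<lambda>L. measure_pmf.expectation (step d (tau+2) L) (Psi d tau))"
    by (simp add: E_bind)
  also have "\<dots> \<le> measure_pmf.expectation ?p (\<lambda>L. (1 - 2*aa/d) * Psi d tau L + (aa/d) * ?P0 - (aa*?P0/(real d)^2) * Zf d (tau+2) L + 2*aa)"
  proof (rule E_mono)
    fix L assume "L \<in> set_pmf ?p"
    from stage_inv[OF L0 this] Suc.prems have "(\<Sum>i<d. L i) = tau*d + s" "\<forall>i<d. L i \<le> tau + 2" "Psi d tau L \<le> ?P0" by auto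
    then show "measure_pmf.expectation (step d (tau+2) L) (Psi d tau) \<le> (1 - 2*aa/d) * Psi d tau L + (aa/d) * ?P0 - (aa*?P0/(real d)^2) * Zf d (tau+2) L + 2*aa"
      using stepA[OF dpos sd] by simp
  qed simp
  also have "\<dots> = (1 - 2*aa/d) * measure_pmf.expectation ?p (Psi d tau) + (aa/d) * ?P0 - (aa*?P0/(real d)^2) * measure_pmf.expectation ?p (Zf d (tau+2)) + 2*aa"
    by (rule E_lin2[where p="?p" and c="1 - 2*aa/d" and f="Psi d tau" and e="(aa/d) * ?P0"
          and cc="aa*?P0/(real d)^2" and g="Zf d (tau+2)" and k="2*aa"]) simp
  also have "\<dots> \<le> (1 - 2*aa/d) * (Kf d s * ?P0 + 2 * aa * s) + (aa/d) * ?P0 - (aa*?P0/(real d)^2) * (real s * (real s - 1) / (6 * real d)) + 2*aa"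
  proof -
    have c: "0 \<le> 1 - 2*aa / real d" using d by (simp add: aa_val field_simps)
    have "(1 - 2*aa/d) * measure_pmf.expectation ?p (Psi d tau) \<le> (1 - 2*aa/d) * (Kf d s * ?P0 + 2 * aa * s)"
      using Suc sd c by (intro mult_left_mono) auto
    moreover have "(aa*?P0/(real d)^2) * (real s * (real s - 1) / (6 * real d)) \<le> (aa*?P0/(real d)^2) * measure_pmf.expectation ?p (Zf d (tau+2))"
      using Zbound[OF d L0, of s] sd P0 by (intro mult_left_mono) (auto simp: aa_val)
    ultimately show ?thesis by linarith
  qed
  also have "\<dots> \<le> Kf d (Suc s) * ?P0 + 2 * aa * real (Suc s)"
  proof -
    have "((1 - 2*aa/d) * Kf d s + aa / d - aa * (real s * (real s - 1) / (6 * real d)) / (real d)^2) * ?P0 \<le> Kf d (Suc s) * ?P0"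
      using Kf_step[OF d sd] P0 by (intro mult_right_mono) auto
    moreover have "(1 - 2*aa/d) * (2 * aa * s) \<le> 2 * aa * s"
      using dpos by (simp add: aa_val field_simps)
    moreover have "(1 - 2*aa/d) * (Kf d s * ?P0 + 2 * aa * s) + (aa/d) * ?P0 - (aa*?P0/(real d)^2) * (real s * (real s - 1) / (6 * real d)) + 2*aa
       = ((1 - 2*aa/d) * Kf d s + aa / d - aa * (real s * (real s - 1) / (6 * real d)) / (real d)^2) * ?P0 + (1 - 2*aa/d) * (2 * aa * s) + 2 * aa"
      by (simp add: algebra_simps)
    moreover have "2 * aa * real (Suc s) = 2 * aa * real s + 2 * aa" by (simp add: algebra_simps)
    ultimately show ?thesis by linarith
  qed
  finally show ?case .
qed



definition r0 :: real where "r0 = (1 + eps) * (1 - c1 - aa/36)"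

lemma stage_final:
  assumes d: "8 \<le> d" and L0: "(\<Sum>i<d. L0 i) = tau*d" "\<forall>i<d. L0 i \<le> tau + 2"
  shows "measure_pmf.expectation (stage d (tau+2) L0 d) (\<lambda>L. Phi d (holes (Suc tau) L))
     \<le> r0 * Psi d tau L0 + real d / 100"
proof -
  let ?p = "stage d (tau+2) L0 d"
  let ?P0 = "Psi d tau L0"
  have P0: "0 \<le> ?P0" using Psi_ge[OF L0(2)] by simp
  have dpos: "0 < real d" using d by simp
  have "measure_pmf.expectation ?p (\<lambda>L. Phi d (holes (Suc tau) L)) = (1 + eps) * measure_pmf.expectation ?p (Psi d tau)"
    by (simp add: Phi_holes_Suc)
  also have "\<dots> \<le> (1 + eps) * (Kf d d * ?P0 + 2 * aa * d)"
    using Ebound[of d L0 tau d] d L0 by (intro mult_left_mono) (auto simp: eps_def)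
  also have "\<dots> \<le> (1 + eps) * ((1 - c1 - aa/36) * ?P0 + 2 * aa * d)"
  proof -
    have q: "real d ^ 3 \<le> 2 * (real d * (real d - 1) * (real d - 2))"
    proof -
      have "2 * (real d * (real d - 1) * (real d - 2)) - real d ^ 3 = real d * (real d * (real d - 6) + 4)"
        by (simp add: algebra_simps power3_eq_cube)
      also have "\<dots> \<ge> 0" using d by (intro mult_nonneg_nonneg add_nonneg_nonneg) auto
      finally show ?thesis by simp
    qed
    have "aa / 36 \<le> aa * (real d * (real d - 1) * (real d - 2)) / (18 * real d ^ 3)"
      using q dpos by (simp add: aa_val divide_simps)
    then have "Kf d d \<le> 1 - c1 - aa/36" unfolding Kf_def using dpos by simp
    then have "Kf d d * ?P0 \<le> (1 - c1 - aa/36) * ?P0" using P0 by (intro mult_right_mono) auto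
    then show ?thesis by (intro mult_left_mono) (auto simp: eps_def)
  qed
  also have "\<dots> = r0 * ?P0 + real d / 100"
    by (simp add: r0_def aa_def eps_def algebra_simps)
  finally show ?thesis .
qed

lemma big_case:
  assumes d: "8 \<le> d"
  shows "measure_pmf.expectation (run d (tau*d)) (\<lambda>L. Phi d (holes tau L)) \<le> 254 * real d"
proof (induction tau)
  case 0
  have "Phi d (holes 0 (\<lambda>_. 0)) = real d * (201/200)^2"
    by (simp add: Phi_def holes_def eps_def)
  moreover have "real d * (201/200)^2 \<le> 254 * real d" by (simp add: power2_eq_square)
  ultimately show ?case by simp
next
  case (Suc tau)
  have dpos: "0 < d" using d by simp
  have "run d (Suc tau * d) = run d (tau*d) \<bind> (\<lambda>L0. stage d (tau+2) L0 d)"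
    using run_split[OF dpos le_refl, of tau] by (simp add: add.commute)
  then have "measure_pmf.expectation (run d (Suc tau * d)) (\<lambda>L. Phi d (holes (Suc tau) L))
     = measure_pmf.expectation (run d (tau*d)) (\<lambda>L0. measure_pmf.expectation (stage d (tau+2) L0 d) (\<lambda>L. Phi d (holes (Suc tau) L)))"
    by (simp add: E_bind finite_run)
  also have "\<dots> \<le> measure_pmf.expectation (run d (tau*d)) (\<lambda>L0. r0 * Psi d tau L0 + real d / 100)"
  proof (rule E_mono[OF finite_run])
    fix L0 assume "L0 \<in> set_pmf (run d (tau*d))"
    from run_inv[OF dpos this] have "(\<Sum>i<d. L0 i) = tau*d" "\<forall>i<d. L0 i \<le> tau + 2"
      using thr_at[OF dpos, of tau] by auto
    then show "measure_pmf.expectation (stage d (tau+2) L0 d) (\<lambda>L. Phi d (holes (Suc tau) L)) \<le> r0 * Psi d tau L0 + real d / 100"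
      by (rule stage_final[OF d])
  qed
  also have "\<dots> = r0 * measure_pmf.expectation (run d (tau*d)) (\<lambda>L. Phi d (holes tau L)) + real d / 100"
    by (simp add: E_lin finite_run Phi_holes)
  also have "\<dots> \<le> r0 * (254 * real d) + real d / 100"
    using Suc by (intro add_right_mono mult_left_mono) (auto simp: r0_def c1_def aa_def eps_def)
  also have "\<dots> \<le> 254 * real d"
    by (simp add: r0_def c1_def aa_def eps_def)
  finally show ?case .
qed



lemma small_case:
  assumes d: "0 < d" "d < 8"
  shows "measure_pmf.expectation (run d (tau*d)) (\<lambda>L. Phi d (holes tau L)) \<le> 254 * real d"
proof -
  have "measure_pmf.expectation (run d (tau*d)) (\<lambda>L. Phi d (holes tau L))
      \<le> measure_pmf.expectation (run d (tau*d)) (\<lambda>L. real d * (201/200)^8)"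
  proof (rule E_mono[OF finite_run])
    fix L assume "L \<in> set_pmf (run d (tau*d))"
    from run_inv[OF d(1) this] thr_at[OF d(1), of tau]
    have sm: "(\<Sum>i<d. L i) = tau*d" and le: "\<forall>i<d. L i \<le> tau + 1" by auto
    have wb: "w tau (L i) \<le> (201/200)^8" if i: "i < d" for i
    proof -
      have "(\<Sum>j\<in>{..<d}-{i}. L j) \<le> (\<Sum>j\<in>{..<d}-{i}. tau + 1)" using le by (intro sum_mono) auto
      also have "\<dots> = (d - 1) * (tau + 1)" using i by simp
      finally have r: "(\<Sum>j\<in>{..<d}-{i}. L j) \<le> (d - 1) * (tau + 1)" .
      have "(\<Sum>j<d. L j) = L i + (\<Sum>j\<in>{..<d}-{i}. L j)" using i by (subst sum.remove[of _ i]) auto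
      with sm r have "tau * d \<le> L i + (d - 1) * (tau + 1)" by simp
      moreover have "(d - 1) * (tau + 1) + (tau + 1) = d * (tau + 1)" using d
        by (cases d) auto
      ultimately have "tau * d + (tau + 1) \<le> L i + d * (tau + 1)" by linarith
      then have k: "tau + 2 - L i \<le> 8" using d by (simp add: algebra_simps)
      have li: "L i \<le> tau + 2" using le i by fastforce
      then have e: "int tau + 2 - int (L i) = int (tau + 2 - L i)" by simp
      have "w tau (L i) = (201/200) ^ (tau + 2 - L i)" unfolding w_def e power_int_of_nat
        by (simp add: eps_def)
      also have "\<dots> \<le> (201/200)^8" using k by (intro power_increasing) auto
      finally show ?thesis .
    qed
    have "Phi d (holes tau L) = (\<Sum>i<d. w tau (L i))" by (simp add: Phi_holes Psi_def)
    also have "\<dots> \<le> (\<Sum>i<d. (201/200)^8)" using wb by (intro sum_mono) auto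
    finally show "Phi d (holes tau L) \<le> real d * (201/200)^8" by simp
  qed
  also have "\<dots> = real d * (201/200)^8" by simp
  also have "\<dots> \<le> real d * 254"
    by (intro mult_left_mono) (simp_all add: power_numeral_reduce)
  also have "\<dots> = 254 * real d" by simp
  finally show ?thesis .
qed

theorem corollary3p5:
  shows "\<exists>C::real. \<forall>n d tau :: nat.
           0 < d \<longrightarrow> d dvd n \<longrightarrow> tau * d \<le> n - 2 * d \<longrightarrow>
           (\<integral>\<^sup>+L. ennreal (Phi d (holes tau L)) \<partial>measure_spmf (adaptive_run d (tau * d))) \<le> ennreal (C * real d)"
proof (intro exI allI impI)
  fix n d tau :: nat
  assume d: "0 < d"
  have bound: "measure_pmf.expectation (run d (tau*d)) (\<lambda>L. Phi d (holes tau L)) \<le> 254 * real d"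
    using big_case[of d tau] small_case[OF d, of tau] by (cases "8 \<le> d") auto
  have "(\<integral>\<^sup>+L. ennreal (Phi d (holes tau L)) \<partial>measure_spmf (adaptive_run d (tau * d)))
      = (\<integral>\<^sup>+L. ennreal (Phi d (holes tau L)) \<partial>measure_pmf (run d (tau * d)))"
    by (simp add: adaptive_run_eq[OF d])
  also have "\<dots> = ennreal (measure_pmf.expectation (run d (tau*d)) (\<lambda>L. Phi d (holes tau L)))"
  proof (rule nn_integral_eq_integral)
    show "integrable (measure_pmf (run d (tau * d))) (\<lambda>L. Phi d (holes tau L))"
      by (rule integrable_measure_pmf_finite[OF finite_run])
    show "AE L in measure_pmf (run d (tau * d)). 0 \<le> Phi d (holes tau L)"
      by (auto simp: Phi_holes Psi_def AE_measure_pmf_iff intro!: sum_nonneg less_imp_le[OF w_pos])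
  qed
  also have "\<dots> \<le> ennreal (254 * real d)" using bound by (rule ennreal_leI)
  finally show "(\<integral>\<^sup>+L. ennreal (Phi d (holes tau L)) \<partial>measure_spmf (adaptive_run d (tau * d))) \<le> ennreal (254 * real d)" .
qed


end
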